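(* Let $p$ be an odd prime, $n\ge1$, $G=\mu_{p^n}$ and let $\mathcal{P}$ be a unital partition of $G$ satisfying condition (p). Let $0\le k\le n-1$, fix $A\in\mathcal{P}_k$ and a generator $x$ of $G$ with $y:=x^{p^k}\in A$, and let $b_k$ be the integer with $u_k=\phi(p^{b_k})$. Then for every integer $i$, $$A_{i,k}=\{x^{p^k(\alpha^i+sp^{b_k})}\mid s=0,1,\dots,p^{n-k-b_k}-1\}.$$
   Context: A unital partition of a finite commutative group $G$ is a partition $G=\{1\}\sqcup A_0\sqcup\dots\sqcup A_s$ such that, with $a_i=\sum_{x\in A_i}x\in\mathbb{Z}[G]$, the $\mathbb{Z}$-span of $1$ and the $a_i$ is closed under multiplication in $\mathbb{Z}[G]$. Condition (p): $|B|$ is a power of $p$ for every $B\in\mathcal{P}$. $B_k=\{x^{p^k}\mid x\text{ a generator of }G\}$, $\mathcal{P}_k=\{B\in\mathcal{P}\mid B\cap B_k\neq\emptyset\}$. Fix an integer $\alpha$ generating $(\mathbb{Z}/p^n\mathbb{Z})^\times$; $u_k$ is the smallest positive integer with $y^{\alpha^{u_k}}\in A$; under (p) one has $u_k=\phi(p^{b_k})$ with $1\le b_k\le n-k$. For $X\subseteq G$, $X^m=\{z^m:z\in X\}$, and $A_{i,k}:=A^{\alpha^i}$. *)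

theory Defs
  imports "HOL-Number_Theory.Number_Theory"
begin

text \<open>Model: G = mu_N (N = p^n) is identified with Z/NZ via a fixed primitive N-th root
  zeta: the element zeta^j is represented by j in {0..<N}. Multiplication in G becomes
  addition mod N, and z^m becomes (m*z) mod N.  Elements of Z[G] are functions
  nat => int (coefficients), supported on {0..<N}.\<close>

definition grp :: "nat \<Rightarrow> nat set" where
  "grp N = {0..<N}"

definition gconv :: "nat \<Rightarrow> (nat \<Rightarrow> int) \<Rightarrow> (nat \<Rightarrow> int) \<Rightarrow> nat \<Rightarrow> int" where
  "gconv N f g z = (if z < N then (\<Sum>a<N. f a * g ((z + N - a) mod N)) else 0)"

text \<open>Z-span of the block sums a_B = sum_{x in B} x (the block {1} gives the unit 1).\<close>
definition zspan :: "nat set set \<Rightarrow> (nat \<Rightarrow> int) set" where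
  "zspan P = {f. \<exists>c :: nat set \<Rightarrow> int. f = (\<lambda>z. \<Sum>B\<in>P. (if z \<in> B then c B else 0))}"

definition unital_partition :: "nat \<Rightarrow> nat set set \<Rightarrow> bool" where
  "unital_partition N P \<longleftrightarrow>
     (\<forall>B\<in>P. B \<noteq> {} \<and> B \<subseteq> grp N) \<and>
     (\<forall>B\<in>P. \<forall>C\<in>P. B \<noteq> C \<longrightarrow> B \<inter> C = {}) \<and>
     \<Union>P = grp N \<and>
     {0} \<in> P \<and>
     (\<forall>f\<in>zspan P. \<forall>g\<in>zspan P. gconv N f g \<in> zspan P)"

definition cond_p :: "nat \<Rightarrow> nat set set \<Rightarrow> bool" where
  "cond_p p P \<longleftrightarrow> (\<forall>B\<in>P. \<exists>e. card B = p ^ e)"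

definition gens :: "nat \<Rightarrow> nat set" where
  "gens N = {x \<in> grp N. coprime x N}"

definition setpow :: "nat \<Rightarrow> nat set \<Rightarrow> nat \<Rightarrow> nat set" where
  "setpow N X m = (\<lambda>z. (m * z) mod N) ` X"

definition Bk :: "nat \<Rightarrow> nat \<Rightarrow> nat \<Rightarrow> nat set" where
  "Bk p n k = setpow (p ^ n) (gens (p ^ n)) (p ^ k)"

definition Pk :: "nat \<Rightarrow> nat \<Rightarrow> nat set set \<Rightarrow> nat \<Rightarrow> nat set set" where
  "Pk p n P k = {B \<in> P. B \<inter> Bk p n k \<noteq> {}}"

text \<open>The residue of a^i modulo N for an integer exponent i (a a unit mod N);
  negative exponents are realised via a^(totient N) = 1 mod N.\<close>
definition upow :: "nat \<Rightarrow> int \<Rightarrow> int \<Rightarrow> nat" where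
  "upow N a i = nat ((a mod int N) ^ nat (i mod int (totient N)) mod int N)"

definition uk :: "nat \<Rightarrow> int \<Rightarrow> nat \<Rightarrow> nat set \<Rightarrow> nat" where
  "uk N \<alpha> y A = (LEAST u::nat. u > 0 \<and> (upow N \<alpha> (int u) * y) mod N \<in> A)"

end

theory Submission
  imports Defs "HOL-Computational_Algebra.Polynomial" "HOL-Computational_Algebra.Primes"
begin

lemma up_D: assumes "unital_partition N P"
  shows "\<forall>B\<in>P. B \<noteq> {} \<and> B \<subseteq> grp N" "\<forall>B\<in>P. \<forall>C\<in>P. B \<noteq> C \<longrightarrow> B \<inter> C = {}"
    "\<Union>P = grp N" "{0} \<in> P" "\<forall>f\<in>zspan P. \<forall>g\<in>zspan P. gconv N f g \<in> zspan P"
  using assms unfolding unital_partition_def by blast+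

lemma up_sub: "unital_partition N P \<Longrightarrow> B \<in> P \<Longrightarrow> B \<subseteq> {0..<N}"
  using up_D(1) unfolding grp_def by blast
lemma up_ne: "unital_partition N P \<Longrightarrow> B \<in> P \<Longrightarrow> B \<noteq> {}"
  using up_D(1) by blast
lemma up_disj: "unital_partition N P \<Longrightarrow> B \<in> P \<Longrightarrow> C \<in> P \<Longrightarrow> z \<in> B \<Longrightarrow> z \<in> C \<Longrightarrow> B = C"
  using up_D(2) by blast
lemma up_cover: "unital_partition N P \<Longrightarrow> z < N \<Longrightarrow> \<exists>B\<in>P. z \<in> B"
  using up_D(3)[of N P] unfolding grp_def by (metis UnionE atLeast0LessThan lessThan_iff)
lemma up_closed: "unital_partition N P \<Longrightarrow> f \<in> zspan P \<Longrightarrow> g \<in> zspan P \<Longrightarrow> gconv N f g \<in> zspan P"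
  using up_D(5) by blast
lemma up_zero: "unital_partition N P \<Longrightarrow> {0} \<in> P"
  using up_D(4) by blast
lemma up_finite: "unital_partition N P \<Longrightarrow> finite P"
proof -
  assume u: "unital_partition N P"
  have "P \<subseteq> Pow {0..<N}" using up_sub[OF u] by auto
  thus ?thesis by (rule finite_subset) auto
qed

lemma zspan_const:
  assumes u: "unital_partition N P" and f: "f \<in> zspan P" and C: "C \<in> P" and z: "z \<in> C" and w: "w \<in> C"
  shows "f z = f w"
proof -
  from f have "\<exists>c. f = (\<lambda>z. \<Sum>B\<in>P. (if z \<in> B then c B else 0))" unfolding zspan_def by (rule CollectD)
  then obtain c where fc: "f = (\<lambda>z. \<Sum>B\<in>P. (if z \<in> B then c B else 0))" by (rule exE)
  have key: "\<And>t. t \<in> C \<Longrightarrow> f t = c C"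
  proof -
    fix t assume t: "t \<in> C"
    have "f t = (\<Sum>B\<in>P. (if B = C then c B else 0))"
      unfolding fc
    proof (rule sum.cong)
      fix B assume "B \<in> P"
      then have "t \<in> B \<longleftrightarrow> B = C" using up_disj[OF u \<open>B \<in> P\<close> C _ t] t by blast
      then show "(if t \<in> B then c B else 0) = (if B = C then c B else 0)" by simp
    qed simp
    also have "\<dots> = c C" using C up_finite[OF u] by simp
    finally show "f t = c C" .
  qed
  show ?thesis using key z w by simp
qed

definition ind :: "nat set \<Rightarrow> nat \<Rightarrow> int" where
  "ind A z = (if z \<in> A then 1 else 0)"

lemma ind_zspan:
  assumes u: "unital_partition N P" and C: "C \<in> P"
  shows "ind C \<in> zspan P"
proof -
  have "ind C = (\<lambda>z. \<Sum>B\<in>P. (if z \<in> B then (if B = C then 1 else 0) else 0))"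
  proof
    fix z
    have "(\<Sum>B\<in>P. (if z \<in> B then (if B = C then 1 else 0) else 0)) = (\<Sum>B\<in>P. (if B = C then ind C z else 0))"
      by (rule sum.cong) (auto simp: ind_def)
    also have "\<dots> = ind C z" using C up_finite[OF u] by simp
    finally show "ind C z = (\<Sum>B\<in>P. (if z \<in> B then (if B = C then 1 else 0) else 0))" by simp
  qed
  thus ?thesis unfolding zspan_def by (intro CollectI exI)
qed

definition red :: "nat \<Rightarrow> int poly \<Rightarrow> nat \<Rightarrow> int" where
  "red N Q z = (if z < N then (\<Sum>j<Suc (degree Q). if j mod N = z then coeff Q j else 0) else 0)"

lemma red_alt:
  assumes "degree Q < K"
  shows "red N Q z = (if z < N then (\<Sum>j<K. if j mod N = z then coeff Q j else 0) else 0)"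
proof -
  have "(\<Sum>j<Suc (degree Q). if j mod N = z then coeff Q j else 0) = (\<Sum>j<K. if j mod N = z then coeff Q j else 0)"
    by (rule sum.mono_neutral_left) (use assms in \<open>auto simp: coeff_eq_0\<close>)
  thus ?thesis by (simp add: red_def)
qed

lemma red_add: "red N (Q + R) z = red N Q z + red N R z"
proof -
  define K where "K = Suc (max (degree Q) (degree R))"
  have "degree (Q+R) < K" unfolding K_def using degree_add_le_max[of Q R] by simp
  moreover have "degree Q < K" "degree R < K" unfolding K_def by auto
  ultimately show ?thesis by (auto simp: red_alt[where K=K] sum.distrib[symmetric] intro!: sum.cong)
qed

lemma red_smult: "red N (smult c Q) z = c * red N Q z"
proof -
  have d: "degree (smult c Q) < Suc (degree Q)" by (rule le_imp_less_Suc[OF degree_smult_le])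
  have "(\<Sum>j<Suc (degree Q). if j mod N = z then coeff (smult c Q) j else 0) = (\<Sum>j<Suc (degree Q). c * (if j mod N = z then coeff Q j else 0))"
    by (rule sum.cong) auto
  also have "\<dots> = c * (\<Sum>j<Suc (degree Q). (if j mod N = z then coeff Q j else 0))"
    by (rule sum_distrib_left[symmetric])
  finally show ?thesis unfolding red_alt[OF d] by (simp add: red_def)
qed

lemma red_zero: "red N 0 z = 0"
  by (simp add: red_def)

lemma red_sum: "finite I \<Longrightarrow> red N (\<Sum>i\<in>I. Q i) z = (\<Sum>i\<in>I. red N (Q i) z)"
proof (induction I rule: finite_induct)
  case empty
  then show ?case by (simp add: red_zero)
next
  case (insert x F)
  then show ?case by (simp add: red_add)
qed

lemma red_monom: "N > 0 \<Longrightarrow> red N (monom c j) z = (if z = j mod N then c else 0)"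
proof -
  assume N: "N > 0"
  have d: "degree (monom c j) < Suc j" by (simp add: degree_monom_le le_imp_less_Suc)
  have "(\<Sum>i<Suc j. if i mod N = z then coeff (monom c j) i else 0) = (\<Sum>i<Suc j. if j = i then (if j mod N = z then c else 0) else 0)"
    by (rule sum.cong) (auto simp: coeff_monom)
  also have "\<dots> = (if j mod N = z then c else 0)" by (simp add: sum.delta)
  finally show ?thesis using N by (auto simp: red_alt[OF d])
qed

lemma gconv_sum_left: "finite I \<Longrightarrow> gconv N (\<lambda>z. \<Sum>i\<in>I. F i z) g = (\<lambda>z. \<Sum>i\<in>I. gconv N (F i) g z)"
proof
  fix z show "gconv N (\<lambda>z. \<Sum>i\<in>I. F i z) g z = (\<Sum>i\<in>I. gconv N (F i) g z)"
    unfolding gconv_def by (cases "z < N") (simp_all add: sum_distrib_right sum.swap[of _ I])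
qed

lemma gconv_sum_right: "finite I \<Longrightarrow> gconv N f (\<lambda>z. \<Sum>i\<in>I. G i z) = (\<lambda>z. \<Sum>i\<in>I. gconv N f (G i) z)"
proof
  fix z show "gconv N f (\<lambda>z. \<Sum>i\<in>I. G i z) z = (\<Sum>i\<in>I. gconv N f (G i) z)"
    unfolding gconv_def by (cases "z < N") (simp_all add: sum_distrib_left sum.swap[of _ I])
qed

lemma mod_aux:
  fixes N z i j :: nat
  assumes "z < N"
  shows "((z + N - i mod N) mod N = j mod N) \<longleftrightarrow> (z = (i + j) mod N)"
proof -
  have N: "N > 0" using assms by simp
  have i': "i mod N < N" using N by simp
  have "((z + N - i mod N) mod N = j mod N) \<longleftrightarrow> [z + N - i mod N = j] (mod N)" by (simp add: cong_def)
  also have "\<dots> \<longleftrightarrow> [z + N - i mod N + i mod N = j + i mod N] (mod N)"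
    by (rule cong_add_rcancel_nat[symmetric])
  also have "z + N - i mod N + i mod N = z + N" using i' by simp
  also have "[z + N = j + i mod N] (mod N) \<longleftrightarrow> [z = i + j] (mod N)"
    by (simp add: cong_def mod_add_right_eq add.commute)
  also have "\<dots> \<longleftrightarrow> z = (i + j) mod N" using assms by (simp add: cong_def)
  finally show ?thesis .
qed

lemma gconv_delta:
  assumes N: "N > 0"
  shows "gconv N (\<lambda>z. if z = i mod N then c else 0) (\<lambda>z. if z = j mod N then d else 0) z
     = (if z = (i + j) mod N then c * d else 0)"
proof (cases "z < N")
  case True
  have "(\<Sum>a<N. (if a = i mod N then c else 0) * (if (z + N - a) mod N = j mod N then d else 0))
      = (\<Sum>a<N. if a = i mod N then (if (z + N - i mod N) mod N = j mod N then c * d else 0) else 0)"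
    by (rule sum.cong) auto
  also have "\<dots> = (if (z + N - i mod N) mod N = j mod N then c * d else 0)"
    using N by (simp add: sum.delta')
  finally show ?thesis using True by (simp add: gconv_def mod_aux)
next
  case False
  then show ?thesis using N by (auto simp: gconv_def)
qed

lemma red_as_sum: "N > 0 \<Longrightarrow> red N Q = (\<lambda>z. \<Sum>i\<le>degree Q. (if z = i mod N then coeff Q i else 0))"
proof
  fix z assume N: "N > 0"
  have "red N Q z = red N (\<Sum>i\<le>degree Q. monom (coeff Q i) i) z" by (simp only: poly_as_sum_of_monoms)
  also have "\<dots> = (\<Sum>i\<le>degree Q. red N (monom (coeff Q i) i) z)" by (rule red_sum) simp
  also have "\<dots> = (\<Sum>i\<le>degree Q. (if z = i mod N then coeff Q i else 0))" using N by (simp add: red_monom)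
  finally show "red N Q z = (\<Sum>i\<le>degree Q. (if z = i mod N then coeff Q i else 0))" .
qed

lemma red_mult:
  assumes N: "N > 0"
  shows "red N (Q * R) = gconv N (red N Q) (red N R)"
proof
  fix z
  have QR: "Q * R = (\<Sum>i\<le>degree Q. \<Sum>j\<le>degree R. monom (coeff Q i * coeff R j) (i + j))"
  proof -
    have "Q * R = (\<Sum>i\<le>degree Q. monom (coeff Q i) i) * (\<Sum>j\<le>degree R. monom (coeff R j) j)"
      by (simp only: poly_as_sum_of_monoms)
    also have "\<dots> = (\<Sum>i\<le>degree Q. \<Sum>j\<le>degree R. monom (coeff Q i) i * monom (coeff R j) j)"
      by (rule sum_product)
    finally show ?thesis by (simp add: mult_monom)
  qed
  have "red N (Q * R) z = (\<Sum>i\<le>degree Q. \<Sum>j\<le>degree R. red N (monom (coeff Q i * coeff R j) (i + j)) z)"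
    unfolding QR by (simp add: red_sum)
  also have "\<dots> = (\<Sum>i\<le>degree Q. \<Sum>j\<le>degree R. (if z = (i + j) mod N then coeff Q i * coeff R j else 0))"
    using N by (simp add: red_monom)
  also have "\<dots> = (\<Sum>i\<le>degree Q. \<Sum>j\<le>degree R. gconv N (\<lambda>z. if z = i mod N then coeff Q i else 0) (\<lambda>z. if z = j mod N then coeff R j else 0) z)"
    using N by (simp add: gconv_delta)
  also have "\<dots> = gconv N (red N Q) (red N R) z"
    unfolding red_as_sum[OF N, of Q] red_as_sum[OF N, of R]
    by (simp add: gconv_sum_left gconv_sum_right)
  finally show "red N (Q * R) z = gconv N (red N Q) (red N R) z" .
qed

lemma frob:
  fixes q :: nat and A :: "nat set"
  assumes q: "prime q" and A: "finite A"
  shows "(of_nat q :: int poly) dvd ((\<Sum>a\<in>A. monom 1 a) ^ q - (\<Sum>a\<in>A. monom 1 (q * a)))"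
  using A
proof (induction A rule: finite_induct)
  case empty
  then show ?case using q by (simp add: prime_gt_0_nat power_0_left)
next
  case (insert a F)
  define m :: "int poly" where "m = monom 1 a"
  define S where "S = (\<Sum>a\<in>F. monom (1::int) a)"
  define T where "T = (\<Sum>a\<in>F. monom (1::int) (q * a))"
  have q0: "q > 0" using q by (simp add: prime_gt_0_nat)
  have mq: "m ^ q = monom 1 (q * a)" unfolding m_def by (simp add: monom_power mult.commute)
  have "(m + S) ^ q = (\<Sum>k\<le>q. of_nat (q choose k) * m ^ k * S ^ (q - k))"
    by (rule binomial_ring)
  also have "\<dots> = (\<Sum>k\<in>{0, q}. of_nat (q choose k) * m ^ k * S ^ (q - k)) + (\<Sum>k\<in>{..q} - {0, q}. of_nat (q choose k) * m ^ k * S ^ (q - k))"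
    using sum.subset_diff[of "{0,q}" "{..q}" "\<lambda>k. of_nat (q choose k) * m ^ k * S ^ (q - k)"] by (simp add: add.commute)
  also have "(\<Sum>k\<in>{0, q}. of_nat (q choose k) * m ^ k * S ^ (q - k)) = S ^ q + m ^ q"
    using q0 by simp
  finally have e: "(m + S) ^ q = S ^ q + m ^ q + (\<Sum>k\<in>{..q} - {0, q}. of_nat (q choose k) * m ^ k * S ^ (q - k))" .
  have d: "(of_nat q :: int poly) dvd (\<Sum>k\<in>{..q} - {0, q}. of_nat (q choose k) * m ^ k * S ^ (q - k))"
  proof (rule dvd_sum)
    fix k assume "k \<in> {..q} - {0, q}"
    hence k: "0 < k" "k < q" by auto
    have "q dvd (q choose k)" by (rule dvd_choose_prime) (use k q in auto)
    then obtain r where "q choose k = q * r" by (elim dvdE)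
    hence "of_nat (q choose k) * m ^ k * S ^ (q - k) = (of_nat q :: int poly) * (of_nat r * m ^ k * S ^ (q - k))"
      by (simp add: mult.assoc)
    thus "(of_nat q :: int poly) dvd of_nat (q choose k) * m ^ k * S ^ (q - k)" by (rule dvdI)
  qed
  have IH: "(of_nat q :: int poly) dvd (S ^ q - T)" using insert.IH unfolding S_def T_def .
  have "(\<Sum>a\<in>insert a F. monom (1::int) a) ^ q - (\<Sum>a\<in>insert a F. monom 1 (q * a))
       = (m + S) ^ q - (monom 1 (q * a) + T)"
    using insert.hyps unfolding m_def S_def T_def by simp
  also have "\<dots> = (S ^ q - T) + (\<Sum>k\<in>{..q} - {0, q}. of_nat (q choose k) * m ^ k * S ^ (q - k))"
    unfolding e mq by simp
  finally show ?case using IH d by simp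
qed

lemma inj_mult_mod: "coprime (q::nat) N \<Longrightarrow> inj_on (\<lambda>a. (q * a) mod N) {0..<N}"
proof (rule inj_onI)
  fix a b assume c: "coprime q N" and a: "a \<in> {0..<N}" and b: "b \<in> {0..<N}" and e: "(q * a) mod N = (q * b) mod N"
  from e have "[q * a = q * b] (mod N)" by (simp add: cong_def)
  hence "[a = b] (mod N)" using cong_mult_lcancel_nat[OF c] by simp
  thus "a = b" using a b by (simp add: cong_less_modulus_unique_nat)
qed

lemma red_ind:
  assumes N: "N > 0" and A: "A \<subseteq> {0..<N}"
  shows "red N (\<Sum>a\<in>A. monom 1 a) = ind A"
proof
  fix z
  have fA: "finite A" using A finite_subset by blast
  have "red N (\<Sum>a\<in>A. monom 1 a) z = (\<Sum>a\<in>A. if z = a mod N then 1 else 0)"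
    using fA N by (simp add: red_sum red_monom)
  also have "\<dots> = (\<Sum>a\<in>A. if z = a then 1 else 0)"
    by (rule sum.cong) (use A in auto)
  also have "\<dots> = ind A z" using fA by (simp add: ind_def)
  finally show "red N (\<Sum>a\<in>A. monom 1 a) z = ind A z" .
qed

lemma red_indq:
  assumes N: "N > 0" and A: "A \<subseteq> {0..<N}" and c: "coprime q N"
  shows "red N (\<Sum>a\<in>A. monom 1 (q * a)) = ind (setpow N A q)"
proof
  fix z
  have fA: "finite A" using A finite_subset by blast
  have inj: "inj_on (\<lambda>a. (q * a) mod N) A" using inj_mult_mod[OF c] A inj_on_subset by blast
  have "red N (\<Sum>a\<in>A. monom 1 (q * a)) z = (\<Sum>a\<in>A. if z = (q * a) mod N then 1 else 0)"
    using fA N by (simp add: red_sum red_monom)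
  also have "\<dots> = (\<Sum>w\<in>(\<lambda>a. (q * a) mod N) ` A. if z = w then 1 else 0)"
    by (simp add: sum.reindex[OF inj] o_def)
  also have "\<dots> = ind (setpow N A q) z" using fA by (simp add: ind_def setpow_def)
  finally show "red N (\<Sum>a\<in>A. monom 1 (q * a)) z = ind (setpow N A q) z" .
qed

lemma red_pow_zspan:
  assumes u: "unital_partition N P" and N: "N > 0" and A: "A \<in> P"
  shows "red N ((\<Sum>a\<in>A. monom 1 a) ^ Suc j) \<in> zspan P"
proof (induction j)
  case 0
  then show ?case using red_ind[OF N up_sub[OF u A]] ind_zspan[OF u A] by simp
next
  case (Suc j)
  have "red N ((\<Sum>a\<in>A. monom 1 a) ^ Suc (Suc j)) = gconv N (red N (\<Sum>a\<in>A. monom 1 a)) (red N ((\<Sum>a\<in>A. monom 1 a) ^ Suc j))"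
    by (simp only: power_Suc[of _ "Suc j"] red_mult[OF N])
  then show ?case using Suc up_closed[OF u] red_ind[OF N up_sub[OF u A]] ind_zspan[OF u A] by simp
qed

lemma mult_prime_union:
  assumes u: "unital_partition N P" and N: "N > 0" and A: "A \<in> P" and q: "prime q" and c: "coprime q N"
    and C: "C \<in> P" and z: "z \<in> C" and zA: "z \<in> setpow N A q" and w: "w \<in> C"
  shows "w \<in> setpow N A q"
proof (rule ccontr)
  assume wA: "w \<notin> setpow N A q"
  have As: "A \<subseteq> {0..<N}" using up_sub[OF u A] .
  have fA: "finite A" using As finite_subset by blast
  let ?F = "(\<Sum>a\<in>A. monom (1::int) a)"
  obtain H where H: "?F ^ q - (\<Sum>a\<in>A. monom 1 (q * a)) = of_nat q * H"
    using frob[OF q fA] by (elim dvdE)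
  have Fq: "?F ^ q = (\<Sum>a\<in>A. monom 1 (q * a)) + smult (of_nat q) H"
    using H by (simp add: algebra_simps of_nat_poly)
  have q1: "q = Suc (q - 1)" using q by (simp add: prime_gt_0_nat)
  have inz: "red N (?F ^ q) \<in> zspan P"
    using red_pow_zspan[OF u N A, of "q - 1"] q1 by simp
  have "red N (?F ^ q) z = red N (?F ^ q) w" by (rule zspan_const[OF u inz C z w])
  hence "ind (setpow N A q) z + of_nat q * red N H z = ind (setpow N A q) w + of_nat q * red N H w"
    unfolding Fq red_add red_smult red_indq[OF N As c] .
  hence "1 + int q * red N H z = int q * red N H w" using zA wA by (simp add: ind_def)
  hence "int q dvd 1" by (metis add_diff_cancel_right' dvd_triv_left dvd_diff right_diff_distrib')
  hence "q = 1" by simp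
  thus False using q by simp
qed

definition Uu :: "nat \<Rightarrow> nat set set \<Rightarrow> nat \<Rightarrow> bool" where
  "Uu N P m \<longleftrightarrow> (\<forall>B\<in>P. \<forall>C\<in>P. \<forall>z w. z \<in> C \<longrightarrow> w \<in> C \<longrightarrow> z \<in> setpow N B m \<longrightarrow> w \<in> setpow N B m)"

lemma setpow_comp: "setpow N (setpow N B m1) m2 = setpow N B (m1 * m2)"
  unfolding setpow_def image_image by (rule image_cong) (auto simp: mod_mult_right_eq mult.commute mult.left_commute)

lemma setpow_one: assumes "B \<subseteq> {0..<N}" "[c = 1] (mod N)" shows "setpow N B c = B"
proof -
  have "\<And>z. z \<in> B \<Longrightarrow> (c * z) mod N = z"
  proof -
    fix z assume z: "z \<in> B"
    have "[c * z = 1 * z] (mod N)" using assms(2) by (rule cong_scalar_right)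
    thus "(c * z) mod N = z" using z assms(1) by (auto simp: cong_def)
  qed
  thus ?thesis unfolding setpow_def by simp
qed

lemma setpow_sub: "B \<subseteq> C \<Longrightarrow> setpow N B m \<subseteq> setpow N C m"
  unfolding setpow_def by auto

lemma setpow_lt: "N > 0 \<Longrightarrow> setpow N B m \<subseteq> {0..<N}"
  unfolding setpow_def by auto

lemma Uu_one: assumes u: "unital_partition N P" shows "Uu N P 1"
  unfolding Uu_def
proof (intro ballI allI impI)
  fix B C z w assume B: "B \<in> P" and C: "C \<in> P" and z: "z \<in> C" and w: "w \<in> C" and zB: "z \<in> setpow N B 1"
  have sB: "setpow N B 1 = B" by (rule setpow_one[OF up_sub[OF u B]]) simp
  have "B = C" using up_disj[OF u B C _ z] zB sB by simp
  thus "w \<in> setpow N B 1" using w sB by simp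
qed

lemma Uu_mult: assumes u: "unital_partition N P" and N: "N > 0" and U1: "Uu N P m1" and U2: "Uu N P m2"
  shows "Uu N P (m1 * m2)"
  unfolding Uu_def
proof (intro ballI allI impI)
  fix B C z w assume B: "B \<in> P" and C: "C \<in> P" and z: "z \<in> C" and w: "w \<in> C" and zB: "z \<in> setpow N B (m1 * m2)"
  from zB obtain v where v: "v \<in> setpow N B m1" and zv: "z = (m2 * v) mod N"
    unfolding setpow_comp[symmetric] by (auto simp: setpow_def)
  have "v < N" using v setpow_lt[OF N, of B m1] by auto
  then obtain D where D: "D \<in> P" "v \<in> D" using up_cover[OF u] by blast
  have DB: "D \<subseteq> setpow N B m1" using U1 B D v unfolding Uu_def by blast
  have "z \<in> setpow N D m2" using zv D(2) by (auto simp: setpow_def)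
  hence "w \<in> setpow N D m2" using U2 D(1) C z w unfolding Uu_def by blast
  hence "w \<in> setpow N (setpow N B m1) m2" using setpow_sub[OF DB] by blast
  thus "w \<in> setpow N B (m1 * m2)" by (simp add: setpow_comp)
qed

lemma Uu_prime: assumes u: "unital_partition N P" and N: "N > 0" and q: "prime q" and c: "coprime q N"
  shows "Uu N P q"
  unfolding Uu_def using mult_prime_union[OF u N _ q c] by blast

lemma Uu_all: assumes u: "unital_partition N P" and N: "N > 0"
  shows "m > 0 \<Longrightarrow> coprime m N \<Longrightarrow> Uu N P m"
proof (induction m rule: less_induct)
  case (less m)
  show ?case
  proof (cases "m = 1")
    case True
    then show ?thesis using Uu_one[OF u] by simp
  next
    case False
    then obtain q where q: "prime q" "q dvd m" using prime_factor_nat by blast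
    then obtain m' where m': "m = q * m'" by (elim dvdE)
    have m'0: "m' > 0" using less.prems m' by (cases "m' = 0") auto
    have "q > 1" using q prime_gt_1_nat by blast
    hence lt: "m' < m" using m' m'0 by simp
    have cq: "coprime q N" using less.prems(2) m' by simp
    have cm: "coprime m' N" using less.prems(2) m' by simp
    have "Uu N P m'" using less.IH[OF lt m'0 cm] .
    moreover have "Uu N P q" using Uu_prime[OF u N q(1) cq] .
    ultimately show ?thesis using Uu_mult[OF u N] m' by simp
  qed
qed

lemma mult_block:
  assumes u: "unital_partition N P" and N: "N > 1" and c: "coprime m N" and B: "B \<in> P"
  shows "setpow N B m \<in> P"
proof -
  have N0: "N > 0" using N by simp
  have m0: "m > 0" using c N by (cases "m = 0") auto
  define m' where "m' = m ^ (totient N - 1)"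
  have t: "totient N > 0" using N by simp
  have mm': "m * m' = m ^ totient N" unfolding m'_def using t
    by (simp add: power_Suc[symmetric])
  have e: "[m * m' = 1] (mod N)" unfolding mm' using euler_theorem[OF c] .
  have e': "[m' * m = 1] (mod N)" using e by (simp add: mult.commute)
  have c': "coprime m' N" unfolding m'_def using c by simp
  have m'0: "m' > 0" unfolding m'_def using m0 by simp
  have Um: "Uu N P m" by (rule Uu_all[OF u N0 m0 c])
  have Um': "Uu N P m'" by (rule Uu_all[OF u N0 m'0 c'])
  obtain b where b: "b \<in> B" using up_ne[OF u B] by blast
  let ?v = "(m * b) mod N"
  have v: "?v \<in> setpow N B m" using b by (simp add: setpow_def)
  have "?v < N" using N0 by simp
  then obtain C where C: "C \<in> P" "?v \<in> C" using up_cover[OF u] by blast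
  have CB: "C \<subseteq> setpow N B m" using Um B C v unfolding Uu_def by blast
  have "setpow N C m' \<subseteq> setpow N (setpow N B m) m'" by (rule setpow_sub[OF CB])
  also have "\<dots> = B" unfolding setpow_comp by (rule setpow_one[OF up_sub[OF u B] e])
  finally have sub: "setpow N C m' \<subseteq> B" .
  have "setpow N C m' \<noteq> {}" using C(2) by (auto simp: setpow_def)
  then obtain t where t: "t \<in> setpow N C m'" by blast
  have "B \<subseteq> setpow N C m'" using Um' C(1) B t sub unfolding Uu_def by blast
  hence "setpow N C m' = B" using sub by blast
  hence "setpow N B m = setpow N C (m' * m)" by (metis setpow_comp)
  also have "\<dots> = C" by (rule setpow_one[OF up_sub[OF u C(1)] e'])
  finally show ?thesis using C(1) by simp
qed

lemma stab_eq:
  assumes u: "unital_partition N P" and N: "N > 1" and c: "coprime m N" and A: "A \<in> P"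
    and z: "z \<in> A" and mz: "(m * z) mod N \<in> A"
  shows "setpow N A m = A"
proof -
  have "(m * z) mod N \<in> setpow N A m" using z by (simp add: setpow_def)
  thus ?thesis using up_disj[OF u mult_block[OF u N c A] A _ mz] by blast
qed

lemma cop_iff: "prime (p::nat) \<Longrightarrow> coprime a p \<longleftrightarrow> \<not> p dvd a"
  by (meson coprime_commute coprime_divisors coprime_self not_prime_unit prime_imp_coprime_nat)

lemma cop_mod: "prime (p::nat) \<Longrightarrow> coprime a p \<Longrightarrow> p dvd d \<Longrightarrow> coprime (a mod d) p"
  using cop_iff dvd_mod_iff by metis

lemma lay_eq:
  fixes p u :: nat assumes p: "prime p" and u: "coprime u p"
  shows "multiplicity p (p ^ v * u) = v"
proof -
  have u0: "u \<noteq> 0" using u p by (cases "u = 0") auto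
  have nd: "\<not> p dvd u" using u p cop_iff by blast
  have "multiplicity p (p ^ v * u) = multiplicity p (p ^ v) + multiplicity p u"
    by (rule prime_elem_multiplicity_mult_distrib) (use p u0 in auto)
  thus ?thesis using p nd by (simp add: not_dvd_imp_multiplicity_0)
qed

lemma lay_dec:
  fixes p z n :: nat assumes p: "prime p" and z: "0 < z" "z < p ^ n"
  obtains u where "z = p ^ multiplicity p z * u" "coprime u p" "u < p ^ (n - multiplicity p z)" "multiplicity p z < n"
proof -
  have z0: "z \<noteq> 0" and pu: "\<not> is_unit p" using z p by auto
  obtain u where u: "z = p ^ multiplicity p z * u" "\<not> p dvd u" by (rule multiplicity_decompose'[OF z0 pu])
  have cu: "coprime u p" using u(2) p cop_iff by blast
  have u0: "u > 0" using u z by (cases "u = 0") auto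
  have p1: "p > 1" using p prime_gt_1_nat by blast
  have "p ^ multiplicity p z dvd z" using u(1) by (metis dvd_triv_left)
  hence "p ^ multiplicity p z \<le> z" using z(1) by (rule dvd_imp_le)
  hence "p ^ multiplicity p z < p ^ n" using z by simp
  hence vn: "multiplicity p z < n" using p1 by (simp add: power_strict_increasing_iff)
  have "p ^ multiplicity p z * u < p ^ multiplicity p z * p ^ (n - multiplicity p z)"
    using z u vn by (simp add: power_add[symmetric])
  hence "u < p ^ (n - multiplicity p z)" by simp
  thus ?thesis using that u cu vn by blast
qed

lemma card_mod_class:
  fixes d e r :: nat assumes d: "0 < d" and r: "r < d"
  shows "card {m. m < d * e \<and> m mod d = r} = e"
proof -
  have "{m. m < d * e \<and> m mod d = r} = (\<lambda>j. r + j * d) ` {..<e}"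
  proof (intro equalityI subsetI)
    fix m assume "m \<in> {m. m < d * e \<and> m mod d = r}"
    hence m: "m < d * e" "m mod d = r" by auto
    have "m = r + (m div d) * d" using m(2) by (metis mod_div_mult_eq add.commute)
    moreover have "m div d < e" using m(1) d by (simp add: div_less_iff_less_mult mult.commute)
    ultimately show "m \<in> (\<lambda>j. r + j * d) ` {..<e}" by blast
  next
    fix m assume "m \<in> (\<lambda>j. r + j * d) ` {..<e}"
    then obtain j where j: "j < e" "m = r + j * d" by auto
    have "r + j * d < d + j * d" using r by simp
    also have "\<dots> = (Suc j) * d" by simp
    also have "\<dots> \<le> e * d" using j(1) by (intro mult_le_mono1) simp
    finally have "m < d * e" using j by (simp add: mult.commute)
    moreover have "m mod d = r" using j r by simp
    ultimately show "m \<in> {m. m < d * e \<and> m mod d = r}" by simp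
  qed
  moreover have "inj_on (\<lambda>j. r + j * d) {..<e}" using d by (auto intro!: inj_onI)
  ultimately show ?thesis by (simp add: card_image)
qed

lemma fiber_card:
  fixes p n z w :: nat
  assumes p: "prime p" and z: "0 < z" "z < p ^ n" and w: "0 < w" "w < p ^ n"
    and lz: "multiplicity p w = multiplicity p z"
  shows "card {m. m < p ^ n \<and> coprime m (p ^ n) \<and> (m * z) mod (p ^ n) = w} = p ^ multiplicity p z"
proof -
  define v where "v = multiplicity p z"
  define d where "d = p ^ (n - v)"
  obtain u where u: "z = p ^ v * u" "coprime u p" "u < d" "v < n"
    using lay_dec[OF p z] unfolding v_def d_def by metis
  obtain u' where u': "w = p ^ v * u'" "coprime u' p" "u' < d"
    using lay_dec[OF p w] lz unfolding v_def d_def by metis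
  have p0: "p > 0" using p prime_gt_0_nat by blast
  have d0: "d > 0" unfolding d_def using p0 by simp
  have N: "p ^ n = p ^ v * d" unfolding d_def using u(4) by (simp add: power_add[symmetric])
  have pd: "p dvd d" unfolding d_def using u(4) by simp
  have cud: "coprime u d" unfolding d_def using u(2) by simp
  define ui where "ui = u ^ (totient d - 1)"
  have tpos: "totient d > 0" using d0 by simp
  have uui: "[u * ui = 1] (mod d)"
    using euler_theorem[OF cud] tpos unfolding ui_def by (simp add: power_Suc[symmetric])
  define r where "r = (u' * ui) mod d"
  have rd: "r < d" unfolding r_def using d0 by simp
  have key: "\<And>m. (m * z) mod (p ^ n) = w \<longleftrightarrow> (m * u) mod d = u'"
  proof -
    fix m
    have mz: "m * z = p ^ v * (m * u)" unfolding u(1) by (simp add: mult.left_commute)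
    have "(m * z) mod (p ^ n) = p ^ v * ((m * u) mod d)"
      unfolding N mz by (rule mod_mult_mult1)
    thus "(m * z) mod (p ^ n) = w \<longleftrightarrow> (m * u) mod d = u'" using u'(1) p0 by simp
  qed
  have key2: "\<And>m. (m * u) mod d = u' \<longleftrightarrow> m mod d = r"
  proof
    fix m assume h: "(m * u) mod d = u'"
    hence "[m * u = u'] (mod d)" using u'(3) by (simp add: cong_def)
    hence "[m * u * ui = u' * ui] (mod d)" by (rule cong_scalar_right)
    moreover have "[m * (u * ui) = m * 1] (mod d)" using uui by (rule cong_scalar_left)
    ultimately have "[m = u' * ui] (mod d)" by (metis cong_sym cong_trans mult.assoc mult_1_right)
    thus "m mod d = r" unfolding r_def by (simp add: cong_def)
  next
    fix m assume h: "m mod d = r"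
    hence "[m = u' * ui] (mod d)" unfolding r_def by (simp add: cong_def)
    hence "[m * u = u' * ui * u] (mod d)" by (rule cong_scalar_right)
    moreover have "[u' * (u * ui) = u' * 1] (mod d)" using uui by (rule cong_scalar_left)
    ultimately have "[m * u = u'] (mod d)" by (metis cong_trans mult.commute mult.left_commute mult_1_right)
    thus "(m * u) mod d = u'" using u'(3) by (simp add: cong_def)
  qed
  have cop: "\<And>m. (m * u) mod d = u' \<Longrightarrow> coprime m (p ^ n)"
  proof -
    fix m assume h: "(m * u) mod d = u'"
    have "\<not> p dvd m"
    proof
      assume "p dvd m"
      hence "p dvd (m * u) mod d" using pd by (simp add: dvd_mod)
      hence "p dvd u'" using h by simp
      thus False using u'(2) p cop_iff by blast
    qed
    hence "coprime m p" using p cop_iff by blast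
    thus "coprime m (p ^ n)" by simp
  qed
  have "{m. m < p ^ n \<and> coprime m (p ^ n) \<and> (m * z) mod (p ^ n) = w} = {m. m < d * p ^ v \<and> m mod d = r}"
    using key key2 cop N by (auto simp: mult.commute)
  thus ?thesis using card_mod_class[OF d0 rd] unfolding v_def by simp
qed

lemma lay_mult:
  fixes p n z m :: nat
  assumes p: "prime p" and z: "0 < z" "z < p ^ n" and m: "coprime m p"
  shows "0 < (m * z) mod p ^ n" "multiplicity p ((m * z) mod p ^ n) = multiplicity p z"
proof -
  define v where "v = multiplicity p z"
  define d where "d = p ^ (n - v)"
  obtain u where u: "z = p ^ v * u" "coprime u p" "u < d" "v < n"
    using lay_dec[OF p z] unfolding v_def d_def by metis
  have p0: "p > 0" using p prime_gt_0_nat by blast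
  have N: "p ^ n = p ^ v * d" unfolding d_def using u(4) by (simp add: power_add[symmetric])
  have pd: "p dvd d" unfolding d_def using u(4) by simp
  have mz: "m * z = p ^ v * (m * u)" unfolding u(1) by (simp add: mult.left_commute)
  have e: "(m * z) mod (p ^ n) = p ^ v * ((m * u) mod d)"
    unfolding N mz by (rule mod_mult_mult1)
  have cmu: "coprime (m * u) p" using m u(2) by simp
  have c: "coprime ((m * u) mod d) p" by (rule cop_mod[OF p cmu pd])
  have "(m * u) mod d \<noteq> 0" using c p by (cases "(m * u) mod d = 0") auto
  thus "0 < (m * z) mod p ^ n" using e p0 by simp
  show "multiplicity p ((m * z) mod p ^ n) = multiplicity p z"
    unfolding e using lay_eq[OF p c] v_def by simp
qed

lemma zero_notin:
  assumes u: "unital_partition N P" and A: "A \<in> P" and y: "y \<in> A" "y \<noteq> 0"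
  shows "0 \<notin> A"
proof
  assume "0 \<in> A"
  hence "A = {0}" using up_disj[OF u A up_zero[OF u], of 0] by simp
  thus False using y by simp
qed

lemma sum_pow_not_ppow:
  fixes p :: nat and V :: "nat set"
  assumes p: "prime p" and V: "finite V" and vm: "vm \<in> V" and le: "\<forall>v\<in>V. v \<le> vm"
    and v0: "v0 \<in> V" "v0 \<noteq> vm" and f: "(\<Sum>v\<in>V. p ^ (vm - v)) = p ^ f"
  shows False
proof -
  have split: "(\<Sum>v\<in>V. p ^ (vm - v)) = 1 + (\<Sum>v\<in>V - {vm}. p ^ (vm - v))"
    using sum.remove[OF V vm, of "\<lambda>v. p ^ (vm - v)"] by simp
  have dR: "p dvd (\<Sum>v\<in>V - {vm}. p ^ (vm - v))"
  proof (rule dvd_sum)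
    fix v assume "v \<in> V - {vm}"
    hence "v < vm" using le by force
    hence "vm - v = Suc (vm - v - 1)" by simp
    thus "p dvd p ^ (vm - v)" by (metis dvd_power zero_less_Suc)
  qed
  have "p ^ (vm - v0) \<le> (\<Sum>v\<in>V - {vm}. p ^ (vm - v))"
    by (rule member_le_sum) (use v0 V in auto)
  moreover have "p ^ (vm - v0) > 0" using p prime_gt_0_nat by simp
  ultimately have R: "(\<Sum>v\<in>V - {vm}. p ^ (vm - v)) > 0" by linarith
  have "p ^ f \<noteq> 1" using f split R by linarith
  hence "f \<noteq> 0" by (cases f) auto
  hence "p dvd p ^ f" by simp
  hence "p dvd 1 + (\<Sum>v\<in>V - {vm}. p ^ (vm - v))" using f split by simp
  hence "p dvd 1" using dR by (metis dvd_add_left_iff)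
  thus False using p by simp
qed

lemma layer:
  assumes u: "unital_partition (p ^ n) P" and p: "prime p" and cp: "cond_p p P"
    and A: "A \<in> P" and y: "y \<in> A" "y \<noteq> 0"
  shows "\<forall>z\<in>A. multiplicity p z = multiplicity p y"
    and "card {m. m < p ^ n \<and> coprime m (p ^ n) \<and> (m * y) mod (p ^ n) \<in> A} = card A * p ^ multiplicity p y"
proof -
  define N where "N = p ^ n"
  note u' = u[folded N_def]
  define S where "S = {m. m < N \<and> coprime m N \<and> (m * y) mod N \<in> A}"
  define lay where "lay = (\<lambda>z::nat. multiplicity p z)"
  define AL where "AL = (\<lambda>v. {w\<in>A. lay w = v})"
  have z0: "0 \<notin> A" by (rule zero_notin[OF u' A y])
  have As: "A \<subseteq> {0..<N}" by (rule up_sub[OF u' A])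
  have Apos: "\<And>z. z \<in> A \<Longrightarrow> 0 < z \<and> z < N" using z0 As by (metis atLeastLessThan_iff gr0I subsetD)
  have N1: "N > 1"
  proof -
    have "0 < y \<and> y < N" using Apos y by blast
    thus ?thesis by linarith
  qed
  have fA: "finite A" using As finite_subset by blast
  have Sz: "\<And>z. z \<in> A \<Longrightarrow> S = {m. m < N \<and> coprime m N \<and> (m * z) mod N \<in> A}"
  proof -
    fix z assume z: "z \<in> A"
    have "\<And>m. coprime m N \<Longrightarrow> (m * y) mod N \<in> A \<longleftrightarrow> (m * z) mod N \<in> A"
    proof -
      fix m assume c: "coprime m N"
      show "(m * y) mod N \<in> A \<longleftrightarrow> (m * z) mod N \<in> A"
      proof
        assume h: "(m * y) mod N \<in> A"
        have "setpow N A m = A" by (rule stab_eq[OF u' N1 c A y(1) h])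
        moreover have "(m * z) mod N \<in> setpow N A m" using z by (simp add: setpow_def)
        ultimately show "(m * z) mod N \<in> A" by simp
      next
        assume h: "(m * z) mod N \<in> A"
        have "setpow N A m = A" by (rule stab_eq[OF u' N1 c A z h])
        moreover have "(m * y) mod N \<in> setpow N A m" using y(1) by (simp add: setpow_def)
        ultimately show "(m * y) mod N \<in> A" by simp
      qed
    qed
    thus "S = {m. m < N \<and> coprime m N \<and> (m * z) mod N \<in> A}" unfolding S_def by blast
  qed
  have cardS: "\<And>z. z \<in> A \<Longrightarrow> card S = card (AL (lay z)) * p ^ lay z"
  proof -
    fix z assume z: "z \<in> A"
    define F where "F = (\<lambda>w. {m. m < N \<and> coprime m N \<and> (m * z) mod N = w})"
    have "S = (\<Union>w\<in>AL (lay z). F w)"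
    proof (intro equalityI subsetI)
      fix m assume "m \<in> S"
      hence m: "m < N" "coprime m N" "(m * z) mod N \<in> A" unfolding Sz[OF z] by auto
      have n0: "n \<noteq> 0" using N1 unfolding N_def by (cases n) auto
      have cmp: "coprime m p" using m(2) n0 unfolding N_def by simp
      have "lay ((m * z) mod N) = lay z"
        unfolding lay_def N_def by (rule lay_mult(2)[OF p _ _ cmp]) (use Apos[OF z] N_def in auto)
      thus "m \<in> (\<Union>w\<in>AL (lay z). F w)" using m unfolding AL_def F_def by auto
    next
      fix m assume "m \<in> (\<Union>w\<in>AL (lay z). F w)"
      thus "m \<in> S" unfolding Sz[OF z] AL_def F_def by auto
    qed
    moreover have "card (\<Union>w\<in>AL (lay z). F w) = (\<Sum>w\<in>AL (lay z). card (F w))"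
      by (rule card_UN_disjoint) (auto simp: AL_def F_def fA)
    ultimately have "card S = (\<Sum>w\<in>AL (lay z). card (F w))" by simp
    also have "\<dots> = (\<Sum>w\<in>AL (lay z). p ^ lay z)"
    proof (rule sum.cong)
      fix w assume w: "w \<in> AL (lay z)"
      hence wA: "w \<in> A" and lw: "lay w = lay z" unfolding AL_def by auto
      show "card (F w) = p ^ lay z"
        unfolding F_def N_def lay_def
        by (rule fiber_card[OF p]) (use Apos[OF z] Apos[OF wA] lw N_def lay_def in auto)
    qed simp
    finally show "card S = card (AL (lay z)) * p ^ lay z" by simp
  qed
  define V where "V = lay ` A"
  have fV: "finite V" unfolding V_def using fA by simp
  have Vne: "V \<noteq> {}" unfolding V_def using y by auto
  define vm where "vm = Max V"
  have vm: "vm \<in> V" unfolding vm_def using fV Vne by simp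
  have le: "\<forall>v\<in>V. v \<le> vm" unfolding vm_def using fV by simp
  have cV: "\<And>v. v \<in> V \<Longrightarrow> card (AL v) * p ^ v = card S"
    unfolding V_def using cardS by auto
  have p0: "p > 0" using p prime_gt_0_nat by blast
  have cv: "\<And>v. v \<in> V \<Longrightarrow> card (AL v) = card (AL vm) * p ^ (vm - v)"
  proof -
    fix v assume v: "v \<in> V"
    have "card (AL v) * p ^ vm = card (AL v) * p ^ v * p ^ (vm - v)"
      using le v by (simp add: power_add[symmetric])
    also have "\<dots> = card (AL vm) * p ^ vm * p ^ (vm - v)" using cV[OF v] cV[OF vm] by simp
    finally have "card (AL v) * p ^ vm = (card (AL vm) * p ^ (vm - v)) * p ^ vm" by (simp add: ac_simps)
    thus "card (AL v) = card (AL vm) * p ^ (vm - v)" using p0 by simp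
  qed
  have Aun: "A = (\<Union>v\<in>V. AL v)" unfolding V_def AL_def by auto
  have "card A = (\<Sum>v\<in>V. card (AL v))"
    by (subst Aun, rule card_UN_disjoint) (use fV fA in \<open>auto simp: AL_def\<close>)
  also have "\<dots> = (\<Sum>v\<in>V. card (AL vm) * p ^ (vm - v))" by (rule sum.cong) (simp_all add: cv)
  also have "\<dots> = card (AL vm) * (\<Sum>v\<in>V. p ^ (vm - v))" by (simp add: sum_distrib_left)
  finally have cA: "card A = card (AL vm) * (\<Sum>v\<in>V. p ^ (vm - v))" .
  obtain E where E: "card A = p ^ E" using cp A unfolding cond_p_def by blast
  have "(\<Sum>v\<in>V. p ^ (vm - v)) dvd p ^ E" using cA E by (metis dvd_triv_right)
  then obtain f where f: "(\<Sum>v\<in>V. p ^ (vm - v)) = p ^ f" using divides_primepow_nat[OF p] by blast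
  have Vs: "V = {vm}"
  proof (rule ccontr)
    assume "V \<noteq> {vm}"
    then obtain v0 where "v0 \<in> V" "v0 \<noteq> vm" using vm by blast
    thus False using sum_pow_not_ppow[OF p fV vm le _ _ f] by blast
  qed
  have all: "\<forall>z\<in>A. lay z = vm" using Vs unfolding V_def by auto
  show "\<forall>z\<in>A. multiplicity p z = multiplicity p y" using all y(1) unfolding lay_def by auto
  have "AL (lay y) = A" using all y(1) unfolding AL_def by auto
  thus "card {m. m < p ^ n \<and> coprime m (p ^ n) \<and> (m * y) mod (p ^ n) \<in> A} = card A * p ^ multiplicity p y"
    using cardS[OF y(1)] unfolding S_def N_def lay_def by simp
qed

lemma cong_mod_mult: "[a = b] (mod N) \<Longrightarrow> (a * w) mod N = (b * w) mod (N::nat)"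
  using cong_scalar_right[of a b N w] by (simp add: cong_def)

lemma pow_split: "(g::nat) ^ i = (g ^ d) ^ (i div d) * g ^ (i mod d)"
proof -
  have e: "d * (i div d) + i mod d = i" by (rule mult_div_mod_eq)
  have "g ^ i = g ^ (d * (i div d) + i mod d)" by (simp only: e)
  also have "\<dots> = (g ^ d) ^ (i div d) * g ^ (i mod d)" by (simp only: power_add power_mult)
  finally show ?thesis .
qed

lemma ord_restrict:
  fixes p n b g :: nat
  assumes p: "prime p" and b: "1 \<le> b" "b \<le> n" and pr: "residue_primroot (p ^ n) g"
  shows "ord (p ^ b) g = totient (p ^ b)"
proof -
  have p1: "p > 1" using p prime_gt_1_nat by blast
  have N1: "p ^ n > 1" using p1 b by (intro one_less_power) auto
  have B1: "p ^ b > 1" using p1 b by (intro one_less_power) auto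
  have cN: "coprime (p ^ n) g" using pr by (simp add: residue_primroot_def)
  have cgp: "coprime g p" using cN b by (simp add: coprime_commute)
  have cB: "coprime (p ^ b) g" using cgp by (simp add: coprime_commute)
  define d where "d = ord (p ^ b) g"
  have d0: "d > 0" unfolding d_def using cB by simp
  have "[g ^ totient (p ^ b) = 1] (mod p ^ b)" using euler_theorem[of g "p^b"] cB by (simp add: coprime_commute)
  hence dvd: "d dvd totient (p ^ b)" unfolding d_def by (simp only: ord_divides)
  have gd: "[g ^ d = 1] (mod p ^ b)" unfolding d_def by (simp only: ord_divides dvd_refl)
  have sub: "totatives (p ^ b) \<subseteq> (\<lambda>i. g ^ i mod p ^ b) ` {..<d}"
  proof
    fix r assume r: "r \<in> totatives (p ^ b)"
    hence r1: "0 < r" "r \<le> p ^ b" "coprime r (p ^ b)" by (auto simp: totatives_def)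
    have rp: "coprime r p" using r1(3) b by simp
    have rB: "r < p ^ b"
    proof (rule ccontr)
      assume "\<not> r < p ^ b" hence "r = p ^ b" using r1 by simp
      thus False using r1(3) B1 b p1 by auto
    qed
    have "p ^ b \<le> p ^ n" using b p1 by (simp add: power_increasing)
    hence "r \<in> totatives (p ^ n)" using r1 rp b by (auto simp: totatives_def)
    hence "r \<in> (\<lambda>i. g ^ i mod p ^ n) ` {..<totient (p ^ n)}"
      using residue_primroot_is_generator[OF N1 pr] unfolding bij_betw_def by (simp only:)
    then obtain i where i: "i < totient (p ^ n)" "g ^ i mod p ^ n = r" by auto
    have "p ^ b dvd p ^ n" using b by (simp add: le_imp_power_dvd)
    hence "g ^ i mod p ^ b = r mod p ^ b" using i(2) by (metis mod_mod_cancel)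
    also have "\<dots> = r" using rB by simp
    finally have gi: "g ^ i mod p ^ b = r" .
    have "g ^ i = (g ^ d) ^ (i div d) * g ^ (i mod d)" by (rule pow_split)
    moreover have "[(g ^ d) ^ (i div d) * g ^ (i mod d) = 1 ^ (i div d) * g ^ (i mod d)] (mod p ^ b)"
      by (intro cong_scalar_right cong_pow gd)
    ultimately have "g ^ i mod p ^ b = g ^ (i mod d) mod p ^ b" by (simp add: cong_def)
    moreover have "i mod d < d" using d0 by simp
    ultimately show "r \<in> (\<lambda>i. g ^ i mod p ^ b) ` {..<d}" using gi by force
  qed
  have "totient (p ^ b) \<le> card ((\<lambda>i. g ^ i mod p ^ b) ` {..<d})"
    unfolding totient_def by (rule card_mono) (use sub in auto)
  also have "\<dots> \<le> d" using card_image_le[of "{..<d}" "\<lambda>i. g ^ i mod p ^ b"] by simp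
  finally have "totient (p ^ b) \<le> d" .
  moreover have "d \<le> totient (p ^ b)" using dvd by (rule dvd_imp_le) (use B1 p1 in simp)
  ultimately show ?thesis unfolding d_def by simp
qed

lemma upow_gen:
  assumes N: "N > 0"
  shows "upow N a i = nat (a mod int N) ^ nat (i mod int (totient N)) mod N"
proof -
  obtain G where G: "a mod int N = int G" using N by (metis nonneg_int_cases pos_mod_sign of_nat_0_less_iff)
  have nG: "nat (a mod int N) = G" using G by simp
  have "int G ^ nat (i mod int (totient N)) mod int N = int (G ^ nat (i mod int (totient N)) mod N)"
    by (simp only: of_nat_power[symmetric] of_nat_mod[symmetric])
  thus ?thesis unfolding upow_def G nG by (simp only: nat_int)
qed

locale setting =
  fixes p n k b :: nat and P :: "nat set set" and A :: "nat set" and x :: nat and \<alpha> :: int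
  assumes p: "prime p" and odd: "odd p" and n1: "n \<ge> 1"
    and up: "unital_partition (p ^ n) P" and cp: "cond_p p P" and kn: "k \<le> n - 1"
    and A: "A \<in> P" and x: "x \<in> gens (p ^ n)" and yA: "(p ^ k * x) mod (p ^ n) \<in> A"
    and pr: "residue_primroot (p ^ n) (nat (\<alpha> mod int (p ^ n)))"
    and ukb: "uk (p ^ n) \<alpha> ((p ^ k * x) mod (p ^ n)) A = totient (p ^ b)"
begin

abbreviation "N \<equiv> p ^ n"
abbreviation "y \<equiv> (p ^ k * x) mod (p ^ n)"
abbreviation "g \<equiv> nat (\<alpha> mod int (p ^ n))"
abbreviation "t \<equiv> totient (p ^ n)"
abbreviation "U \<equiv> uk (p ^ n) \<alpha> ((p ^ k * x) mod (p ^ n)) A"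

lemma p1: "p > 1" using p prime_gt_1_nat by blast
lemma p0: "p > 0" using p1 by simp
lemma N1: "N > 1" using p1 n1 by (intro one_less_power) auto
lemma N0: "N > 0" using p0 by simp
lemma t0: "t > 0" using N0 by simp
lemma cxN: "coprime x N" using x by (simp add: gens_def)
lemma xN: "x < N" using x by (simp add: gens_def grp_def)
lemma cxp: "coprime x p" using cxN n1 by simp
lemma cgN: "coprime g N" using pr by (simp add: residue_primroot_def coprime_commute)

lemma y_dec: "y = p ^ k * (x mod p ^ (n - k))" "coprime (x mod p ^ (n - k)) p"
proof -
  have nk: "n = k + (n - k)" using kn n1 by simp
  have "p ^ n = p ^ k * p ^ (n - k)" by (subst nk) (simp add: power_add)
  thus "y = p ^ k * (x mod p ^ (n - k))" by (simp add: mod_mult_mult1)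
  have "n - k \<noteq> 0" using kn n1 by simp
  hence "p dvd p ^ (n - k)" using dvd_power[of "n - k" p] by simp
  thus "coprime (x mod p ^ (n - k)) p" by (rule cop_mod[OF p cxp])
qed

lemma y_pos: "0 < y" "y < N"
proof -
  have "x mod p ^ (n - k) \<noteq> 0" using y_dec(2) p1 by (cases "x mod p ^ (n - k) = 0") auto
  thus "0 < y" using y_dec(1) p0 by simp
  show "y < N" using N0 by simp
qed

lemma lay_y: "multiplicity p y = k"
  using y_dec lay_eq[OF p y_dec(2)] by simp

lemma upow_eq: "upow N \<alpha> i = g ^ nat (i mod int t) mod N"
  using upow_gen[OF N0] .

lemma g_t: "[g ^ t = 1] (mod N)" using euler_theorem[OF cgN] .

lemma g_pow_mod: "[g ^ u = g ^ (u mod t)] (mod N)"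
proof -
  have "g ^ u = (g ^ t) ^ (u div t) * g ^ (u mod t)" by (rule pow_split)
  moreover have "[(g ^ t) ^ (u div t) * g ^ (u mod t) = 1 ^ (u div t) * g ^ (u mod t)] (mod N)"
    by (intro cong_scalar_right cong_pow g_t)
  ultimately show ?thesis by simp
qed

lemma upow_nat: "[upow N \<alpha> (int u) = g ^ u] (mod N)"
proof -
  have "int u mod int t = int (u mod t)" by (simp only: of_nat_mod[symmetric])
  hence "nat (int u mod int t) = u mod t" by (simp only: nat_int)
  hence "upow N \<alpha> (int u) = g ^ (u mod t) mod N" by (simp add: upow_eq)
  thus ?thesis using g_pow_mod by (simp add: cong_def)
qed

lemma U_props: "U > 0" "(g ^ U * y) mod N \<in> A" "U \<le> t" "\<And>u. 0 < u \<Longrightarrow> u < U \<Longrightarrow> (g ^ u * y) mod N \<notin> A"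
proof -
  define Q where "Q = (\<lambda>u::nat. u > 0 \<and> (upow N \<alpha> (int u) * y) mod N \<in> A)"
  have U_def': "U = (LEAST u. Q u)" unfolding Q_def uk_def by simp
  have Qeq: "\<And>u. Q u \<longleftrightarrow> u > 0 \<and> (g ^ u * y) mod N \<in> A"
    unfolding Q_def using cong_mod_mult[OF upow_nat] by (simp only:)
  have gty: "(g ^ t * y) mod N = y" using cong_mod_mult[OF g_t, of y] y_pos(2) by (simp only: mult_1 mod_less)
  have "Q t" unfolding Qeq using t0 gty yA by (simp only: simp_thms)
  have QU: "Q U" unfolding U_def' by (rule LeastI[of Q t, OF \<open>Q t\<close>])
  have Ut: "U \<le> t" unfolding U_def' by (rule Least_le[of Q t, OF \<open>Q t\<close>])
  have "U > 0 \<and> (g ^ U * y) mod N \<in> A" using QU by (simp only: Qeq)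
  thus "U > 0" by (rule conjunct1)
  from \<open>U > 0 \<and> (g ^ U * y) mod N \<in> A\<close> show "(g ^ U * y) mod N \<in> A" by (rule conjunct2)
  show "U \<le> t" by (rule Ut)
  show "\<And>u. 0 < u \<Longrightarrow> u < U \<Longrightarrow> (g ^ u * y) mod N \<notin> A"
  proof -
    fix u assume u: "0 < u" "u < U"
    have "\<not> Q u" using not_less_Least[of u Q] u(2) unfolding U_def' by blast
    thus "(g ^ u * y) mod N \<notin> A" using u(1) by (simp only: Qeq simp_thms)
  qed
qed

end

lemma cancel_block:
  assumes u: "unital_partition N P" and N: "N > 1" and c: "coprime c N" and A: "A \<in> P"
    and sA: "setpow N A c = A" and w: "w < N" and cw: "(c * w) mod N \<in> A"
  shows "w \<in> A"
proof -
  obtain W where W: "W \<in> P" "w \<in> W" using up_cover[OF u w] by blast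
  have "(c * w) mod N \<in> setpow N W c" using W(2) by (simp add: setpow_def)
  hence "setpow N W c = A" using up_disj[OF u mult_block[OF u N c W(1)] A _ cw] by blast
  hence "(\<lambda>a. (c * a) mod N) ` W = (\<lambda>a. (c * a) mod N) ` A" using sA by (simp add: setpow_def)
  hence "W = A" using inj_on_image_eq_iff[OF inj_mult_mod[OF c] up_sub[OF u W(1)] up_sub[OF u A]] by simp
  thus ?thesis using W(2) by simp
qed

context setting begin

lemma Ap: "A \<in> P" by (rule A)

lemma yne: "y \<noteq> 0" using y_pos by simp

lemma lay_all: "\<forall>z\<in>A. multiplicity p z = k"
  using layer(1)[OF up p cp A yA yne] lay_y by simp

lemma cardS: "card {m. m < N \<and> coprime m N \<and> (m * y) mod N \<in> A} = card A * p ^ k"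
  using layer(2)[OF up p cp A yA yne] lay_y by simp

lemma cgU: "coprime (g ^ U) N" using cgN coprime_power_left_iff by blast

lemma stabU: "setpow N A (g ^ U) = A"
  by (rule stab_eq[OF up N1 cgU A yA U_props(2)])

lemma dvdU: "(g ^ u * y) mod N \<in> A \<Longrightarrow> U dvd u"
proof (induction u rule: less_induct)
  case (less u)
  show ?case
  proof (cases "u = 0")
    case True then show ?thesis by simp
  next
    case False
    show ?thesis
    proof (cases "u < U")
      case True
      thus ?thesis using U_props(4)[of u] False less.prems by simp
    next
      case False2: False
      hence uU: "u = U + (u - U)" by simp
      have "(g ^ u * y) mod N = (g ^ U * (g ^ (u - U) * y)) mod N"
        by (subst uU) (simp only: power_add mult.assoc)
      also have "\<dots> = (g ^ U * ((g ^ (u - U) * y) mod N)) mod N" by (rule mod_mult_right_eq[symmetric])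
      finally have e: "(g ^ u * y) mod N = (g ^ U * ((g ^ (u - U) * y) mod N)) mod N" .
      have "(g ^ U * ((g ^ (u - U) * y) mod N)) mod N \<in> A" using less.prems by (simp only: e)
      hence "(g ^ (u - U) * y) mod N \<in> A"
        by (rule cancel_block[OF up N1 cgU A stabU mod_less_divisor[OF N0]])
      moreover have "u - U < u" using U_props(1) False by simp
      ultimately have "U dvd u - U" using less.IH by blast
      hence "U dvd (u - U) + U" by simp
      thus ?thesis using False2 by simp
    qed
  qed
qed

lemma powsA: "(g ^ (j * U) * y) mod N \<in> A"
proof (induction j)
  case 0
  then show ?case using yA by simp
next
  case (Suc j)
  have "(g ^ (Suc j * U) * y) mod N = (g ^ U * (g ^ (j * U) * y)) mod N"
    by (simp only: mult_Suc power_add mult.assoc)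
  also have "\<dots> = (g ^ U * ((g ^ (j * U) * y) mod N)) mod N" by (rule mod_mult_right_eq[symmetric])
  also have "\<dots> \<in> setpow N A (g ^ U)" using Suc by (simp add: setpow_def)
  finally show ?case using stabU by simp
qed

lemma gen: assumes c: "coprime m N" shows "\<exists>u. [m = g ^ u] (mod N)"
proof -
  have Nne: "N \<noteq> 0" using N0 by simp
  have cm: "coprime (m mod N) N" using c coprime_mod_left_iff[OF Nne] by simp
  have "m mod N \<noteq> 0"
  proof
    assume "m mod N = 0"
    hence "coprime 0 N" using cm by simp
    hence "N dvd 1" by (simp only: coprime_0_left_iff)
    hence "N \<le> 1" by (rule dvd_imp_le) simp
    thus False using N1 by simp
  qed
  hence "m mod N \<in> totatives N" using cm N0 by (auto simp: totatives_def intro: less_imp_le)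
  hence "m mod N \<in> (\<lambda>i. g ^ i mod N) ` {..<t}"
    using residue_primroot_is_generator[OF N1 pr] unfolding bij_betw_def by (simp only:)
  then obtain u where "g ^ u mod N = m mod N" by auto
  hence "[m = g ^ u] (mod N)" unfolding cong_def by (rule sym)
  thus ?thesis by blast
qed

lemma cgp: "coprime g p" using cgN n1 by simp

lemma fwd:
  assumes bn: "b \<le> n" and c: "coprime m N" and mA: "(m * y) mod N \<in> A"
  shows "[m = 1] (mod p ^ b)"
proof -
  obtain u where u: "[m = g ^ u] (mod N)" using gen[OF c] by blast
  have "(g ^ u * y) mod N = (m * y) mod N" using cong_mod_mult[OF u] by simp
  hence "U dvd u" using dvdU mA by simp
  hence "totient (p ^ b) dvd u" using ukb by simp
  then obtain j where j: "u = totient (p ^ b) * j" by (elim dvdE)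
  have cgb: "coprime g (p ^ b)" using cgp by simp
  have "[(g ^ totient (p ^ b)) ^ j = 1 ^ j] (mod p ^ b)" by (intro cong_pow euler_theorem[OF cgb])
  hence g1: "[g ^ u = 1] (mod p ^ b)" unfolding j by (simp add: power_mult)
  have "p ^ b dvd N" using bn by (simp add: le_imp_power_dvd)
  hence "[m = g ^ u] (mod p ^ b)" using u by (rule cong_dvd_modulus_nat[rotated])
  thus ?thesis using g1 by (rule cong_trans)
qed

lemma bwd:
  assumes bn: "b \<le> n" and c: "coprime m N" and m1: "[m = 1] (mod p ^ b)"
  shows "(m * y) mod N \<in> A"
proof -
  obtain u where u: "[m = g ^ u] (mod N)" using gen[OF c] by blast
  have "p ^ b dvd N" using bn by (simp add: le_imp_power_dvd)
  hence "[m = g ^ u] (mod p ^ b)" using u by (rule cong_dvd_modulus_nat[rotated])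
  hence g1: "[g ^ u = 1] (mod p ^ b)" using m1 by (metis cong_sym cong_trans)
  have "totient (p ^ b) dvd u"
  proof (cases "b = 0")
    case True then show ?thesis by simp
  next
    case False
    hence o: "ord (p ^ b) g = totient (p ^ b)" using ord_restrict[OF p _ bn pr] by simp
    have "ord (p ^ b) g dvd u" using g1 by (simp only: ord_divides)
    thus ?thesis unfolding o .
  qed
  hence "U dvd u" using ukb by simp
  then obtain j' where j': "u = U * j'" by (elim dvdE)
  hence j: "u = j' * U" by (simp only: mult.commute)
  have "(m * y) mod N = (g ^ u * y) mod N" using cong_mod_mult[OF u] by simp
  thus ?thesis using powsA[of j'] j by simp
qed

lemma rep: assumes a: "a \<in> A" shows "\<exists>m. m < N \<and> coprime m N \<and> (m * y) mod N = a"
proof -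
  have z0: "0 \<notin> A" by (rule zero_notin[OF up A yA yne])
  have "a < N" using up_sub[OF up A] a by auto
  moreover have "0 < a" using z0 a by (cases "a = 0") auto
  ultimately have "card {m. m < N \<and> coprime m N \<and> (m * y) mod N = a} = p ^ multiplicity p y"
    using fiber_card[OF p y_pos(1) y_pos(2)] lay_all a lay_y by simp
  hence "card {m. m < N \<and> coprime m N \<and> (m * y) mod N = a} > 0" using p0 by simp
  hence "{m. m < N \<and> coprime m N \<and> (m * y) mod N = a} \<noteq> {}" using card_gt_0_iff by blast
  then obtain m where "m \<in> {m. m < N \<and> coprime m N \<and> (m * y) mod N = a}" by blast
  thus ?thesis by (intro exI[of _ m]) (simp only: mem_Collect_eq)
qed

end

lemma aux_scale: "[G = 1] (mod M) \<Longrightarrow> (G * (w * K)) mod (M * K) = (w * (K::nat)) mod (M * K)"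
proof -
  assume h: "[G = 1] (mod M)"
  have "(G * (w * K)) mod (M * K) = ((G * w) mod M) * K" by (simp only: mult.assoc[symmetric] mod_mult_mult2)
  also have "(G * w) mod M = (1 * w) mod M" by (rule cong_mod_mult[OF h])
  also have "(1 * w) mod M * K = (w * K) mod (M * K)" by (simp only: mult_1 mod_mult_mult2)
  finally show ?thesis .
qed

context setting begin

lemma b_le: "b \<le> n - k"
proof -
  define e where "e = n - k"
  have e1: "e \<ge> 1" unfolding e_def using kn n1 by simp
  define w where "w = x mod p ^ e"
  have yw: "y = w * p ^ k" using y_dec(1) unfolding w_def e_def by (simp add: mult.commute)
  have Ne: "N = p ^ e * p ^ k" unfolding e_def using kn n1 by (simp add: power_add[symmetric])
  have cge: "coprime g (p ^ e)" using cgp by simp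
  have ge: "[g ^ totient (p ^ e) = 1] (mod p ^ e)" by (rule euler_theorem[OF cge])
  have "(g ^ totient (p ^ e) * (w * p ^ k)) mod (p ^ e * p ^ k) = (w * p ^ k) mod (p ^ e * p ^ k)"
    by (rule aux_scale[OF ge])
  hence "(g ^ totient (p ^ e) * y) mod N = y mod N" by (simp only: yw Ne[symmetric])
  hence "(g ^ totient (p ^ e) * y) mod N = y" by simp
  hence "(g ^ totient (p ^ e) * y) mod N \<in> A" using yA by simp
  hence "U dvd totient (p ^ e)" by (rule dvdU)
  hence "totient (p ^ b) dvd totient (p ^ e)" using ukb by simp
  moreover have "totient (p ^ e) > 0" using p0 by simp
  ultimately have le: "totient (p ^ b) \<le> totient (p ^ e)" by (rule dvd_imp_le)
  show ?thesis
  proof (rule ccontr)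
    assume "\<not> b \<le> n - k"
    hence be: "b > e" unfolding e_def by simp
    have "p ^ (e - 1) < p ^ (b - 1)" using be e1 p1 by (simp add: power_strict_increasing_iff)
    hence "p ^ (e - 1) * (p - 1) < p ^ (b - 1) * (p - 1)" using p1 by simp
    hence "totient (p ^ e) < totient (p ^ b)"
      using totient_prime_power[OF p, of e] totient_prime_power[OF p, of b] e1 be by simp
    thus False using le by simp
  qed
qed

lemma bn: "b \<le> n" using b_le by simp

lemma units_set: "{m. m < N \<and> coprime m N} = totatives N"
proof (intro equalityI subsetI)
  fix m assume "m \<in> {m. m < N \<and> coprime m N}"
  hence m: "m < N" "coprime m N" by auto
  have "m \<noteq> 0"
  proof
    assume "m = 0"
    hence "N dvd 1" using m(2) by (simp only: coprime_0_left_iff)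
    hence "N \<le> 1" by (rule dvd_imp_le) simp
    thus False using N1 by simp
  qed
  thus "m \<in> totatives N" using m by (auto simp: totatives_def)
next
  fix m assume "m \<in> totatives N"
  hence m: "0 < m" "m \<le> N" "coprime m N" by (auto simp: totatives_def)
  have "m \<noteq> N"
  proof
    assume "m = N"
    hence "N dvd 1" using m(3) by (simp only: coprime_self)
    hence "N \<le> 1" by (rule dvd_imp_le) simp
    thus False using N1 by simp
  qed
  thus "m \<in> {m. m < N \<and> coprime m N}" using m by simp
qed

lemma b_ge: "b \<ge> 1"
proof (rule ccontr)
  assume "\<not> b \<ge> 1"
  hence b0: "b = 0" by simp
  have all: "\<And>m. coprime m N \<Longrightarrow> (m * y) mod N \<in> A"
    using bwd[OF bn] b0 by simp
  have "{m. m < N \<and> coprime m N \<and> (m * y) mod N \<in> A} = {m. m < N \<and> coprime m N}"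
    using all by blast
  hence "card A * p ^ k = totient N" using cardS units_set by (simp add: totient_def)
  also have "\<dots> = p ^ (n - 1) * (p - 1)" using totient_prime_power[OF p] n1 by simp
  finally have eq: "card A * p ^ k = p ^ (n - 1) * (p - 1)" .
  obtain E where E: "card A = p ^ E" using cp A unfolding cond_p_def by blast
  have "(p - 1) dvd p ^ (E + k)" using eq E by (metis dvd_triv_right power_add)
  moreover have "coprime (p - 1) p" using coprime_Suc_right_nat[of "p - 1"] p1 by simp
  hence "coprime (p - 1) (p ^ (E + k))" by simp
  ultimately have "is_unit (p - 1)" using coprime_common_divisor[of "p - 1" "p ^ (E + k)" "p - 1"] by simp
  hence "p = 2" using p1 by simp
  thus False using odd by simp
qed

end

context setting begin

lemma c_props: "coprime (upow N \<alpha> i) N" "upow N \<alpha> i < N"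
proof -
  have Nne: "N \<noteq> 0" using N0 by simp
  have "coprime (g ^ nat (i mod int t)) N" using cgN coprime_power_left_iff by blast
  hence "coprime (g ^ nat (i mod int t) mod N) N" using coprime_mod_left_iff[OF Nne] by blast
  thus "coprime (upow N \<alpha> i) N" by (simp only: upow_eq)
  show "upow N \<alpha> i < N" by (simp only: upow_eq mod_less_divisor[OF N0])
qed

lemma final:
  "setpow N A (upow N \<alpha> i) = {(x * (p ^ k * (upow N \<alpha> i + s * p ^ b))) mod N | s. s < p ^ (n - k - b)}"
proof -
  define c where "c = upow N \<alpha> i"
  define e' where "e' = n - k - b"
  have cN: "coprime c N" unfolding c_def by (rule c_props(1))
  have cp': "coprime c p" using cN n1 by simp
  have Nfac: "N = p ^ k * p ^ b * p ^ e'" unfolding e'_def using b_le kn n1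
    by (simp add: power_add[symmetric])
  have pb: "p ^ b dvd N" using bn by (simp add: le_imp_power_dvd)
  show ?thesis unfolding c_def[symmetric] e'_def[symmetric]
  proof (intro equalityI subsetI)
    fix z assume "z \<in> setpow N A c"
    then obtain a where a: "a \<in> A" "z = (c * a) mod N" by (auto simp: setpow_def)
    obtain m where m: "m < N" "coprime m N" "(m * y) mod N = a" using rep[OF a(1)] by blast
    have m1: "[m = 1] (mod p ^ b)" using fwd[OF bn m(2)] m(3) a(1) by simp
    have "m \<noteq> 0"
    proof
      assume "m = 0"
      hence "N dvd 1" using m(2) by (simp only: coprime_0_left_iff)
      hence "N \<le> 1" by (rule dvd_imp_le) simp
      thus False using N1 by simp
    qed
    hence "p ^ b dvd m - 1" using m1 by (simp add: cong_altdef_nat)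
    then obtain \<tau> where \<tau>: "m - 1 = p ^ b * \<tau>" by (elim dvdE)
    have mt: "m = 1 + p ^ b * \<tau>" using \<tau> \<open>m \<noteq> 0\<close> by simp
    define s where "s = (c * \<tau>) mod p ^ e'"
    define q where "q = (c * \<tau>) div p ^ e'"
    have ctq: "c * \<tau> = s + p ^ e' * q" unfolding s_def q_def by simp
    have s_lt: "s < p ^ e'" unfolding s_def using p0 by simp
    have "z = (c * ((m * (p ^ k * x)) mod N)) mod N" using a(2) m(3)[symmetric] by (simp add: mod_mult_right_eq)
    also have "\<dots> = (c * (m * (p ^ k * x))) mod N" by (rule mod_mult_right_eq)
    also have "c * (m * (p ^ k * x)) = x * (p ^ k * (c + s * p ^ b)) + N * (x * q)"
    proof -
      have "c * (m * (p ^ k * x)) = x * p ^ k * (c + (c * \<tau>) * p ^ b)" unfolding mt by (simp add: algebra_simps)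
      also have "\<dots> = x * (p ^ k * (c + s * p ^ b)) + (p ^ k * p ^ b * p ^ e') * (x * q)"
        unfolding ctq by (simp add: algebra_simps)
      finally show ?thesis unfolding Nfac[symmetric] .
    qed
    also have "(x * (p ^ k * (c + s * p ^ b)) + N * (x * q)) mod N = (x * (p ^ k * (c + s * p ^ b))) mod N"
      by (rule mod_mult_self2)
    finally show "z \<in> {(x * (p ^ k * (c + s * p ^ b))) mod N | s. s < p ^ e'}" using s_lt by blast
  next
    fix z assume "z \<in> {(x * (p ^ k * (c + s * p ^ b))) mod N | s. s < p ^ e'}"
    then obtain s where s: "s < p ^ e'" "z = (x * (p ^ k * (c + s * p ^ b))) mod N" by blast
    define ci where "ci = c ^ (t - 1)"
    have cci: "[c * ci = 1] (mod N)" using euler_theorem[OF cN] t0 unfolding ci_def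
      by (simp add: power_Suc[symmetric])
    define m where "m = ci * (c + s * p ^ b)"
    have cciN: "coprime ci N" unfolding ci_def using cN coprime_power_left_iff by blast
    have "\<not> p dvd c + s * p ^ b"
    proof
      assume h: "p dvd c + s * p ^ b"
      have "p dvd s * p ^ b" using b_ge by (simp add: dvd_power)
      hence "p dvd c" using h by (simp add: dvd_add_left_iff)
      thus False using cp' cop_iff[OF p] by blast
    qed
    hence "coprime (c + s * p ^ b) p" using cop_iff[OF p] by blast
    hence "coprime (c + s * p ^ b) N" using coprime_power_right_iff by blast
    hence mN: "coprime m N" unfolding m_def using cciN by (simp only: coprime_mult_left_iff)
    have "m = ci * c + p ^ b * (ci * s)" unfolding m_def by (simp add: algebra_simps)
    hence "m mod p ^ b = (ci * c) mod p ^ b" by (simp only: mod_mult_self2)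
    moreover have "[c * ci = 1] (mod p ^ b)" by (rule cong_dvd_modulus_nat[OF cci pb])
    ultimately have m1: "[m = 1] (mod p ^ b)" by (simp add: cong_def mult.commute)
    have aA: "(m * y) mod N \<in> A" by (rule bwd[OF bn mN m1])
    have "(c * ((m * y) mod N)) mod N = (c * (m * (p ^ k * x))) mod N"
      by (simp only: mod_mult_right_eq)
    also have "c * (m * (p ^ k * x)) = (c * ci) * ((c + s * p ^ b) * (p ^ k * x))"
      unfolding m_def by (simp add: algebra_simps)
    also have "((c * ci) * ((c + s * p ^ b) * (p ^ k * x))) mod N = (1 * ((c + s * p ^ b) * (p ^ k * x))) mod N"
      by (rule cong_mod_mult[OF cci])
    also have "\<dots> = z" unfolding s(2) by (simp add: algebra_simps)
    finally have "(c * ((m * y) mod N)) mod N = z" .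
    thus "z \<in> setpow N A c" using aA by (auto simp: setpow_def)
  qed
qed

end

theorem mainTheorem12:
  fixes p n k b :: nat and P :: "nat set set" and A :: "nat set" and x :: nat
    and \<alpha> i :: int
  assumes "prime p" and "odd p" and "n \<ge> 1"
    and "unital_partition (p ^ n) P" and "cond_p p P"
    and "k \<le> n - 1"
    and "A \<in> Pk p n P k"
    and "x \<in> gens (p ^ n)"
    and "(p ^ k * x) mod (p ^ n) \<in> A"
    and "residue_primroot (p ^ n) (nat (\<alpha> mod int (p ^ n)))"
    and "uk (p ^ n) \<alpha> ((p ^ k * x) mod (p ^ n)) A = totient (p ^ b)"
  shows "setpow (p ^ n) A (upow (p ^ n) \<alpha> i) =
    {(x * (p ^ k * (upow (p ^ n) \<alpha> i + s * p ^ b))) mod (p ^ n) | s. s < p ^ (n - k - b)}"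
proof -
  have A: "A \<in> P" using assms(7) by (simp add: Pk_def)
  interpret setting p n k b P A x \<alpha>
    by unfold_locales (fact assms(1), fact assms(2), fact assms(3), fact assms(4), fact assms(5),
      fact assms(6), fact A, fact assms(8), fact assms(9), fact assms(10), fact assms(11))
  show ?thesis by (rule final)
qed

end
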